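(* Let $A$ be a commutative $\mathbb C$-algebra, $q\in\mathbb C\setminus\{0\}$, $k$ a positive integer and $n$ a positive integer. Let $g\in A$ and $\mathfrak e_i,\mathfrak h_i,\mathfrak p_i\in A$ ($0\le i\le n$) satisfy $\mathfrak e_0=\mathfrak h_0=1$, $\mathfrak p_0=q^{1-k}\bigl(1+(k-1)_q\bigr)$, and for every $1\le m\le n$ $$\sum_{i=0}^{m-1}(-q)^i\mathfrak e_i\mathfrak p_{m-i}=(-1)^{m-1}m_q\,\mathfrak e_m+(-1)^mq\sum_{i=1}^{\lfloor m/2\rfloor}\bigl(q^{m-2i-k}-q^{-m+2i}\bigr)\mathfrak e_{m-2i}g^i,$$ $$\sum_{i=0}^{m-1}q^{-i}\mathfrak h_i\mathfrak p_{m-i}=m_q\,\mathfrak h_m+\sum_{i=1}^{\lfloor m/2\rfloor}\bigl(q^{m-2i-1}+q^{-m+2i+1-k}\bigr)\mathfrak h_{m-2i}g^i,$$ and for every $0\le m\le n$: $\sum_{i=0}^m(-1)^i\mathfrak e_i\mathfrak h_{m-i}=\delta_{m,0}-\delta_{m,2}\,g$. Define $\mathfrak e'_i,\mathfrak h'_i$ by $\mathfrak e'_i=\mathfrak h'_i=0$ for $i<0$ and $\mathfrak e'_i=\mathfrak e_i+\mathfrak e'_{i-2}g$, $\mathfrak h'_i=\mathfrak h_i+\mathfrak h'_{i-2}g$ for $i\ge0$; define $\mathfrak p'_0=q^{-k}k_q$, $\mathfrak p'_1=\mathfrak p_1$, $\mathfrak p'_i=\mathfrak p_i+(q^2\mathfrak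 p'_{i-2}-\mathfrak p_{i-2})g$ ($i\ge2$); and $\mathfrak p''_0=q^{2-k}(k-2)_q$, $\mathfrak p''_1=\mathfrak p_1$, $\mathfrak p''_i=\mathfrak p_i+(q^{-2}\mathfrak p''_{i-2}-\mathfrak p_{i-2})g$ ($i\ge2$). Then for all $1\le m\le n$ $$\sum_{i=0}^{m-1}(-q)^i\mathfrak e_i\mathfrak p'_{m-i}=(-1)^{m-1}m_q\,\mathfrak e_m,\qquad \sum_{i=0}^{m-1}q^{-i}\mathfrak h_i\mathfrak p''_{m-i}=m_q\,\mathfrak h_m,$$ and for all $0\le m\le n$ $$\sum_{i=0}^m(-1)^i\mathfrak e'_i\mathfrak h_{m-i}=\delta_{m,0}=\sum_{i=0}^m(-1)^i\mathfrak e_i\mathfrak h'_{m-i}.$$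
   Context: For an integer $m\ge0$, $m_q:=q^{m-1}+q^{m-3}+\dots+q^{1-m}$ (so $m_q=(q^m-q^{-m})/(q-q^{-1})$ when $q^2\ne1$, and $0_q=0$); for negative $m$, $m_q:=-(-m)_q$. $\delta_{a,b}$ is the Kronecker symbol. *)

theory Defs
  imports Complex_Main
begin

text \<open>A commutative C-algebra: a commutative ring A together with its structure map,
  a unital ring homomorphism from the complex numbers into A.\<close>
definition C_alg_map :: "(complex \<Rightarrow> 'a::comm_ring_1) \<Rightarrow> bool" where
  "C_alg_map \<phi> \<longleftrightarrow> \<phi> 1 = 1 \<and> (\<forall>x y. \<phi> (x + y) = \<phi> x + \<phi> y) \<and> (\<forall>x y. \<phi> (x * y) = \<phi> x * \<phi> y)"

definition qint :: "complex \<Rightarrow> int \<Rightarrow> complex" where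
  "qint q m = (if m \<ge> 0 then (\<Sum>j<nat m. q powi (m - 1 - 2 * int j))
               else - (\<Sum>j<nat (- m). q powi (- m - 1 - 2 * int j)))"

fun shiftseq :: "(nat \<Rightarrow> 'a::comm_ring_1) \<Rightarrow> 'a \<Rightarrow> nat \<Rightarrow> 'a" where
  "shiftseq x g 0 = x 0"
| "shiftseq x g (Suc 0) = x 1"
| "shiftseq x g (Suc (Suc i)) = x (Suc (Suc i)) + shiftseq x g i * g"

fun pseq :: "'a::comm_ring_1 \<Rightarrow> 'a \<Rightarrow> (nat \<Rightarrow> 'a) \<Rightarrow> 'a \<Rightarrow> nat \<Rightarrow> 'a" where
  "pseq c r p g 0 = c"
| "pseq c r p g (Suc 0) = p 1"
| "pseq c r p g (Suc (Suc i)) = p (Suc (Suc i)) + (r * pseq c r p g i - p i) * g"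

end

theory Submission
  imports Defs
begin

lemma pw: "(q::complex) \<noteq> 0 \<Longrightarrow> q powi (int a - int b) = q ^ a * inverse q ^ b"
  by (simp add: power_int_diff field_simps power_inverse)

lemma qint_nat: "qint q (int j) = (\<Sum>i<j. q powi (int j - 1 - 2 * int i))"
  by (simp add: qint_def)

lemma qint_R2:
  assumes "q \<noteq> 0"
  shows "qint q (int (Suc j)) = q ^ j + inverse q * qint q (int j)"
proof -
  have "qint q (int (Suc j)) = (\<Sum>i<Suc j. q powi (int (Suc j) - 1 - 2 * int i))"
    by (rule qint_nat)
  also have "\<dots> = q powi (int (Suc j) - 1 - 2 * int 0) + (\<Sum>i<j. q powi (int (Suc j) - 1 - 2 * int (Suc i)))"
    by (rule sum.lessThan_Suc_shift)
  also have "q powi (int (Suc j) - 1 - 2 * int 0) = q ^ j" by simp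
  also have "(\<Sum>i<j. q powi (int (Suc j) - 1 - 2 * int (Suc i))) = (\<Sum>i<j. inverse q * q powi (int j - 1 - 2 * int i))"
  proof (rule sum.cong[OF refl])
    fix i
    have "q powi (int (Suc j) - 1 - 2 * int (Suc i)) = q powi ((int j - 1 - 2 * int i) + (-1))"
      by (rule arg_cong[where f="power_int q"]) simp
    also have "\<dots> = q powi (int j - 1 - 2 * int i) * q powi (-1)"
      using assms by (rule power_int_add[OF disjI1])
    finally show "q powi (int (Suc j) - 1 - 2 * int (Suc i)) = inverse q * q powi (int j - 1 - 2 * int i)"
      by (simp add: power_int_minus)
  qed
  finally show ?thesis by (simp add: qint_nat sum_distrib_left)
qed

lemma qint_closed:
  assumes "q \<noteq> 0"
  shows "(q - inverse q) * qint q (int j) = q ^ j - inverse q ^ j"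
proof (induction j)
  case 0 then show ?case by (simp add: qint_def)
next
  case (Suc j)
  have "(q - inverse q) * qint q (int (Suc j)) = (q - inverse q) * q ^ j + inverse q * ((q - inverse q) * qint q (int j))"
    unfolding qint_R2[OF assms] by (simp add: algebra_simps)
  also have "\<dots> = (q - inverse q) * q ^ j + inverse q * (q ^ j - inverse q ^ j)" by (simp only: Suc)
  also have "\<dots> = q ^ Suc j - inverse q ^ Suc j" by (simp add: algebra_simps)
  finally show ?case .
qed

lemma alg1:
  fixes s q w a ia b ib Q Q' :: complex
  assumes "q*w = 1" "b*ib = 1" "(q-w)*Q = a - ia"
  shows "s*q*(a*w*ib - ia) + q^2*(-s*Q) + q^2*(s*a)*(w*ib*(b + w*Q')) - (-s*Q) - (s*a)*(ib*(1+Q')) = 0"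
proof -
  have "s*q*(a*w*ib - ia) + q^2*(-s*Q) + q^2*(s*a)*(w*ib*(b + w*Q')) - (-s*Q) - (s*a)*(ib*(1+Q'))
     = s*q*((a - ia) - (q-w)*Q) + (q*w-1)*(s*a*ib - s*Q + s*q*a*b*ib + s*a*ib*Q'*(q*w+1)) + (b*ib-1)*(s*q*a)"
    by (simp add: algebra_simps power2_eq_square)
  then show ?thesis using assms by simp
qed
lemma alg2:
  fixes q w a ia b ib Q Q' Q'' :: complex
  assumes "q*w = 1" "b*ib = 1" "(q-w)*Q = a - ia" "w*Q'' - Q' = - w*b"
  shows "(a*w + ia*ib) + w^2 * Q + w^2 * ia * (q*ib*Q'') - Q - ia*(ib*(1+Q')) = 0"
proof -
  have "(a*w + ia*ib) + w^2 * Q + w^2 * ia * (q*ib*Q'') - Q - ia*(ib*(1+Q'))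
     = - w * ((q-w)*Q - (a - ia)) + (q*w-1) * Q + ia*ib*(w*Q'' - Q' + w*b) + (q*w-1)*ia*ib*w*Q'' - w*ia*(b*ib-1)"
    by (simp add: algebra_simps power2_eq_square)
  then show ?thesis using assms by simp
qed

lemma scalar1:
  assumes q0: "(q::complex) \<noteq> 0" and kpos: "k > 0"
  shows "(-1)^j * q * (q powi (int j - int k) - q powi (- int j))
     + q^2 * ((-1)^(j-1) * qint q (int j))
     + q^2 * (-q)^j * (q powi (- int k) * qint q (int k))
     - (-1)^(j-1) * qint q (int j)
     - (-q)^j * (q powi (1 - int k) * (1 + qint q (int k - 1))) = 0"
proof -
  obtain k' where k: "k = Suc k'" using kpos by (cases k) auto
  define w where "w = inverse q"
  define a where "a = q ^ j"
  define ia where "ia = w ^ j"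
  define b where "b = q ^ k'"
  define ib where "ib = w ^ k'"
  define s :: complex where "s = (-1)^j"
  define Q where "Q = qint q (int j)"
  define Q' where "Q' = qint q (int k')"
  have qw: "q * w = 1" using q0 by (simp add: w_def)
  have bib: "b * ib = 1" unfolding b_def ib_def using qw by (simp flip: power_mult_distrib)
  have cl: "(q - w) * Q = a - ia" using qint_closed[OF q0] by (simp add: w_def Q_def a_def ia_def)
  have sQ: "(-1)^(j-1) * Q = - s * Q" by (cases j) (simp_all add: s_def Q_def qint_def)
  have p1: "q powi (int j - int k) = a * w * ib" using pw[OF q0, of j k] by (simp add: k a_def w_def ib_def)
  have p2: "q powi (- int j) = ia" using pw[OF q0, of 0 j] by (simp add: ia_def w_def)
  have p3: "q powi (- int k) = w * ib" using pw[OF q0, of 0 k] by (simp add: k ib_def w_def)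
  have p4: "q powi (1 - int k) = ib" using pw[OF q0, of 0 k'] by (simp add: k ib_def w_def)
  have qk: "qint q (int k) = b + w * Q'" using qint_R2[OF q0, of k'] by (simp add: k b_def w_def Q'_def)
  have qk1: "qint q (int k - 1) = Q'" by (simp add: k Q'_def)
  have mq: "(-q)^j = s * a" unfolding s_def a_def by (rule power_minus)
  show ?thesis
    unfolding p1 p2 p3 p4 qk qk1 mq
    unfolding Q_def[symmetric] sQ s_def[symmetric]
    by (rule alg1[OF qw bib cl])
qed

lemma scalar2:
  assumes q0: "(q::complex) \<noteq> 0" and kpos: "k > 0"
  shows "(q powi (int j - 1) + q powi (- int j + 1 - int k))
     + q powi (-2) * qint q (int j)
     + q powi (-2) * q powi (- int j) * (q powi (2 - int k) * qint q (int k - 2))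
     - qint q (int j)
     - q powi (- int j) * (q powi (1 - int k) * (1 + qint q (int k - 1))) = 0"
proof -
  obtain k' where k: "k = Suc k'" using kpos by (cases k) auto
  define w where "w = inverse q"
  define a where "a = q ^ j"
  define ia where "ia = w ^ j"
  define b where "b = q ^ k'"
  define ib where "ib = w ^ k'"
  define Q where "Q = qint q (int j)"
  define Q' where "Q' = qint q (int k')"
  define Q'' where "Q'' = qint q (int k' - 1)"
  have qw: "q * w = 1" using q0 by (simp add: w_def)
  have bib: "b * ib = 1" unfolding b_def ib_def using qw by (simp flip: power_mult_distrib)
  have cl: "(q - w) * Q = a - ia" using qint_closed[OF q0] by (simp add: w_def Q_def a_def ia_def)
  have rel: "w * Q'' - Q' = - w * b"
  proof (cases k')
    case 0 then show ?thesis by (simp add: Q''_def Q'_def b_def qint_def)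
  next
    case (Suc t)
    have "Q' = q ^ t + w * Q''" using qint_R2[OF q0, of t] by (simp add: Suc Q'_def Q''_def w_def)
    moreover have "w * b = q ^ t" using qw by (simp add: b_def Suc mult.assoc[symmetric] mult.commute[of w q])
    ultimately show ?thesis by simp
  qed
  have p1: "q powi (int j - 1) = a * w" using pw[OF q0, of j 1] by (simp add: a_def w_def)
  have p2: "q powi (- int j) = ia" using pw[OF q0, of 0 j] by (simp add: ia_def w_def)
  have p3: "q powi (- int j + 1 - int k) = ia * ib"
  proof -
    have "q powi (- int j + 1 - int k) = q powi ((int 0 - int j) + (int 0 - int k'))"
      by (rule arg_cong[where f="power_int q"]) (simp add: k)
    also have "\<dots> = q powi (int 0 - int j) * q powi (int 0 - int k')"
      using q0 by (rule power_int_add[OF disjI1])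
    finally show ?thesis using pw[OF q0, of 0 j] pw[OF q0, of 0 k'] by (simp add: ia_def ib_def w_def)
  qed
  have p4: "q powi (-2) = w ^ 2" using pw[OF q0, of 0 2] by (simp add: w_def)
  have p5: "q powi (2 - int k) = q * ib"
  proof -
    have "q powi (2 - int k) = q powi (int 1 + (int 0 - int k'))"
      by (rule arg_cong[where f="power_int q"]) (simp add: k)
    also have "\<dots> = q powi (int 1) * q powi (int 0 - int k')"
      using q0 by (rule power_int_add[OF disjI1])
    finally show ?thesis using pw[OF q0, of 0 k'] by (simp add: ib_def w_def)
  qed
  have p6: "q powi (1 - int k) = ib" using pw[OF q0, of 0 k'] by (simp add: k ib_def w_def)
  have qk1: "qint q (int k - 1) = Q'" by (simp add: k Q'_def)
  have qk2: "qint q (int k - 2) = Q''" by (simp add: k Q''_def)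
  show ?thesis
    unfolding p1 p2 p3 p4 p5 p6 qk1 qk2 Q_def[symmetric]
    by (rule alg2[OF qw bib cl rel])
qed

lemma pseq_sum:
  fixes a :: "nat \<Rightarrow> 'a::comm_ring_1"
  shows "(\<Sum>i<Suc (Suc j). a i * pseq c r p g (Suc (Suc j) - i))
    = (\<Sum>i<Suc (Suc j). a i * p (Suc (Suc j) - i))
      + g * (r * ((\<Sum>i<j. a i * pseq c r p g (j - i)) + a j * c) - ((\<Sum>i<j. a i * p (j - i)) + a j * p 0))"
proof -
  have A: "a i * pseq c r p g (Suc (Suc j) - i) = a i * p (Suc (Suc j) - i) + g * (r * (a i * pseq c r p g (j - i))) - g * (a i * p (j - i))"
    if "i \<in> {..<Suc j}" for i
  proof -
    from that have "Suc (Suc j) - i = Suc (Suc (j - i))" by auto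
    then show ?thesis by (simp add: algebra_simps)
  qed
  have "(\<Sum>i<Suc (Suc j). a i * pseq c r p g (Suc (Suc j) - i))
     = (\<Sum>i<Suc j. a i * pseq c r p g (Suc (Suc j) - i)) + a (Suc j) * p 1"
    by (simp add: Suc_diff_Suc)
  also have "(\<Sum>i<Suc j. a i * pseq c r p g (Suc (Suc j) - i))
     = (\<Sum>i<Suc j. a i * p (Suc (Suc j) - i)) + g * (r * (\<Sum>i<Suc j. a i * pseq c r p g (j - i))) - g * (\<Sum>i<Suc j. a i * p (j - i))"
    by (subst sum.cong[OF refl A], assumption) (simp only: sum.distrib sum_subtractf sum_distrib_left)
  also have "(\<Sum>i<Suc (Suc j). a i * p (Suc (Suc j) - i)) = (\<Sum>i<Suc j. a i * p (Suc (Suc j) - i)) + a (Suc j) * p 1"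
    by (simp add: Suc_diff_Suc)
  moreover have "(\<Sum>i<Suc j. a i * pseq c r p g (j - i)) = (\<Sum>i<j. a i * pseq c r p g (j - i)) + a j * c" by simp
  moreover have "(\<Sum>i<Suc j. a i * p (j - i)) = (\<Sum>i<j. a i * p (j - i)) + a j * p 0" by simp
  ultimately show ?thesis by (simp add: algebra_simps)
qed

lemma Ssum:
  fixes F :: "nat \<Rightarrow> 'a::comm_ring_1"
  shows "(\<Sum>i=1..Suc (Suc j) div 2. F (Suc (Suc j) - 2 * i) * g ^ i) = F j * g + g * (\<Sum>i=1..j div 2. F (j - 2 * i) * g ^ i)"
proof -
  have d: "Suc (Suc j) div 2 = Suc (j div 2)" by simp
  have "(\<Sum>i=1..Suc (j div 2). F (Suc (Suc j) - 2 * i) * g ^ i) = (\<Sum>i=0..j div 2. F (Suc (Suc j) - 2 * Suc i) * g ^ Suc i)"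
    using sum.shift_bounds_cl_Suc_ivl[of "\<lambda>i. F (Suc (Suc j) - 2 * i) * g ^ i" 0 "j div 2"] by simp
  also have "\<dots> = (\<Sum>i=0..j div 2. g * (F (j - 2 * i) * g ^ i))"
    by (rule sum.cong) (simp_all add: algebra_simps)
  also have "\<dots> = g * (F (j - 2 * 0) * g ^ 0) + (\<Sum>i=Suc 0..j div 2. g * (F (j - 2 * i) * g ^ i))"
    by (rule sum.atLeast_Suc_atMost) simp
  finally show ?thesis by (simp add: d sum_distrib_left algebra_simps)
qed

lemma shiftL:
  fixes x y :: "nat \<Rightarrow> 'a::comm_ring_1"
  shows "(\<Sum>i\<le>Suc (Suc j). (-1)^i * shiftseq x g i * y (Suc (Suc j) - i))
   = (\<Sum>i\<le>Suc (Suc j). (-1)^i * x i * y (Suc (Suc j) - i)) + g * (\<Sum>i\<le>j. (-1)^i * shiftseq x g i * y (j - i))"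
proof -
  have "(\<Sum>i\<le>j. (-1)^(Suc (Suc i)) * shiftseq x g (Suc (Suc i)) * y (Suc (Suc j) - Suc (Suc i)))
    = (\<Sum>i\<le>j. (-1)^(Suc (Suc i)) * x (Suc (Suc i)) * y (Suc (Suc j) - Suc (Suc i))) + g * (\<Sum>i\<le>j. (-1)^i * shiftseq x g i * y (j - i))"
    by (simp add: sum.distrib sum_distrib_left algebra_simps)
  then show ?thesis by (simp only: sum.atMost_Suc_shift) (simp add: algebra_simps)
qed

lemma shiftR:
  fixes x y :: "nat \<Rightarrow> 'a::comm_ring_1"
  shows "(\<Sum>i\<le>Suc (Suc j). (-1)^i * x i * shiftseq y g (Suc (Suc j) - i))
   = (\<Sum>i\<le>Suc (Suc j). (-1)^i * x i * y (Suc (Suc j) - i)) + g * (\<Sum>i\<le>j. (-1)^i * x i * shiftseq y g (j - i))"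
proof -
  have A: "(-1)^i * x i * shiftseq y g (Suc (Suc j) - i) = (-1)^i * x i * y (Suc (Suc j) - i) + g * ((-1)^i * x i * shiftseq y g (j - i))"
    if "i \<in> {..j}" for i
  proof -
    from that have "Suc (Suc j) - i = Suc (Suc (j - i))" by auto
    then show ?thesis by (simp add: algebra_simps)
  qed
  have "(\<Sum>i\<le>j. (-1)^i * x i * shiftseq y g (Suc (Suc j) - i))
     = (\<Sum>i\<le>j. (-1)^i * x i * y (Suc (Suc j) - i)) + g * (\<Sum>i\<le>j. (-1)^i * x i * shiftseq y g (j - i))"
    by (subst sum.cong[OF refl A], assumption) (simp only: sum.distrib sum_distrib_left)
  then show ?thesis by (simp add: Suc_diff_Suc algebra_simps)
qed

lemma deltaind:
  fixes U V :: "nat \<Rightarrow> 'a::comm_ring_1"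
  assumes "U 0 = V 0" "U 1 = V 1"
    and st: "\<And>j. Suc (Suc j) \<le> n \<Longrightarrow> U (Suc (Suc j)) = V (Suc (Suc j)) + g * U j"
    and V: "\<And>m. m \<le> n \<Longrightarrow> V m = (if m = 0 then 1 else 0) - (if m = 2 then g else 0)"
  shows "m \<le> n \<Longrightarrow> U m = (if m = 0 then 1 else 0)"
proof (induction m rule: less_induct)
  case (less m)
  show ?case
  proof (cases m)
    case 0 then show ?thesis using assms(1) V[of 0] by simp
  next
    case (Suc m')
    show ?thesis
    proof (cases m')
      case 0 then show ?thesis using assms(2) V[of 1] Suc less.prems by simp
    next
      case (Suc j)
      have "U m = V m + g * U j" using st less.prems \<open>m = Suc m'\<close> Suc by simp
      moreover have "U j = (if j = 0 then 1 else 0)" using less.IH[of j] less.prems \<open>m = Suc m'\<close> Suc by simp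
      moreover have "V m = (if m = 0 then 1 else 0) - (if m = 2 then g else 0)" using V less.prems by simp
      ultimately show ?thesis using \<open>m = Suc m'\<close> Suc by auto
    qed
  qed
qed

theorem lemma6p5:
  fixes \<phi> :: "complex \<Rightarrow> 'a::comm_ring_1"
    and q :: complex and k n :: nat
    and g :: 'a and e h p :: "nat \<Rightarrow> 'a"
  assumes alg: "C_alg_map \<phi>"
    and q0: "q \<noteq> 0" and kpos: "k > 0" and npos: "n > 0"
    and e0: "e 0 = 1" and h0: "h 0 = 1"
    and p0: "p 0 = \<phi> (q powi (1 - int k) * (1 + qint q (int k - 1)))"
    and eqE: "\<And>m. 1 \<le> m \<Longrightarrow> m \<le> n \<Longrightarrow>
       (\<Sum>i<m. \<phi> ((- q) ^ i) * e i * p (m - i))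
       = \<phi> ((- 1) ^ (m - 1) * qint q (int m)) * e m
         + \<phi> ((- 1) ^ m * q) * (\<Sum>i=1..m div 2.
              \<phi> (q powi (int m - 2 * int i - int k) - q powi (- int m + 2 * int i)) * e (m - 2 * i) * g ^ i)"
    and eqH: "\<And>m. 1 \<le> m \<Longrightarrow> m \<le> n \<Longrightarrow>
       (\<Sum>i<m. \<phi> (q powi (- int i)) * h i * p (m - i))
       = \<phi> (qint q (int m)) * h m
         + (\<Sum>i=1..m div 2.
              \<phi> (q powi (int m - 2 * int i - 1) + q powi (- int m + 2 * int i + 1 - int k)) * h (m - 2 * i) * g ^ i)"
    and eqEH: "\<And>m. m \<le> n \<Longrightarrow>
       (\<Sum>i\<le>m. (- 1) ^ i * e i * h (m - i))
       = (if m = 0 then 1 else 0) - (if m = 2 then g else 0)"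
  shows "(\<forall>m. 1 \<le> m \<and> m \<le> n \<longrightarrow>
           (\<Sum>i<m. \<phi> ((- q) ^ i) * e i * pseq (\<phi> (q powi (- int k) * qint q (int k))) (\<phi> (q ^ 2)) p g (m - i))
           = \<phi> ((- 1) ^ (m - 1) * qint q (int m)) * e m)
       \<and> (\<forall>m. 1 \<le> m \<and> m \<le> n \<longrightarrow>
           (\<Sum>i<m. \<phi> (q powi (- int i)) * h i * pseq (\<phi> (q powi (2 - int k) * qint q (int k - 2))) (\<phi> (q powi (-2))) p g (m - i))
           = \<phi> (qint q (int m)) * h m)
       \<and> (\<forall>m. m \<le> n \<longrightarrow>
           (\<Sum>i\<le>m. (- 1) ^ i * shiftseq e g i * h (m - i)) = (if m = 0 then 1 else 0)
         \<and> (\<Sum>i\<le>m. (- 1) ^ i * e i * shiftseq h g (m - i)) = (if m = 0 then 1 else 0))"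
proof -
  obtain hadd: "\<And>x y. \<phi> (x + y) = \<phi> x + \<phi> y" and hmul: "\<And>x y. \<phi> (x * y) = \<phi> x * \<phi> y"
    and h1: "\<phi> 1 = 1"
    using alg unfolding C_alg_map_def by blast
  have hz: "\<phi> 0 = 0" using hadd[of 0 0] by simp
  have hneg: "\<phi> (- x) = - \<phi> x" for x
  proof -
    have "\<phi> x + \<phi> (- x) = 0" using hadd[of x "- x"] hz by simp
    then show ?thesis by (simp add: add_eq_0_iff)
  qed
  have hdiff: "\<phi> (x - y) = \<phi> x - \<phi> y" for x y
    using hadd[of x "- y"] hneg[of y] by simp
  note homs = hadd hmul hdiff hneg h1 hz
  define c1 where "c1 = \<phi> (q powi (- int k) * qint q (int k))"
  define r1 where "r1 = \<phi> (q ^ 2)"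
  define E where "E m = (\<Sum>i<m. \<phi> ((- q) ^ i) * e i * pseq c1 r1 p g (m - i))" for m
  define P where "P m = (\<Sum>i<m. \<phi> ((- q) ^ i) * e i * p (m - i))" for m
  define FE where "FE j = \<phi> (q powi (int j - int k) - q powi (- int j)) * e j" for j
  define S where "S m = (\<Sum>i=1..m div 2. FE (m - 2 * i) * g ^ i)" for m
  define A where "A m = (- 1) ^ (m - 1) * qint q (int m)" for m
  have Pform: "P m = \<phi> (A m) * e m + \<phi> ((- 1) ^ m * q) * S m" if "m \<le> n" for m
  proof (cases "m = 0")
    case True then show ?thesis by (simp add: P_def A_def S_def qint_def hz)
  next
    case False
    have "(\<Sum>i=1..m div 2. \<phi> (q powi (int m - 2 * int i - int k) - q powi (- int m + 2 * int i)) * e (m - 2 * i) * g ^ i) = S m"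
      unfolding S_def
    proof (rule sum.cong[OF refl])
      fix i assume "i \<in> {1..m div 2}"
      then have "int (m - 2 * i) = int m - 2 * int i" by auto
      then show "\<phi> (q powi (int m - 2 * int i - int k) - q powi (- int m + 2 * int i)) * e (m - 2 * i) * g ^ i = FE (m - 2 * i) * g ^ i"
        by (simp add: FE_def)
    qed
    then show ?thesis using eqE[of m] False that by (simp add: P_def A_def)
  qed
  have Eind: "m \<le> n \<Longrightarrow> E m = \<phi> (A m) * e m" for m
  proof (induction m rule: less_induct)
    case (less m)
    show ?case
    proof (cases m)
      case 0 then show ?thesis by (simp add: E_def A_def qint_def hz)
    next
      case (Suc m')
      show ?thesis
      proof (cases m')
        case 0
        have "E 1 = P 1" by (simp add: E_def P_def)
        moreover have "S 1 = 0" by (simp add: S_def)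
        ultimately show ?thesis using Pform[of 1] less.prems Suc 0 by simp
      next
        case (Suc j)
        have m: "m = Suc (Suc j)" using \<open>m = Suc m'\<close> Suc by simp
        have E1: "E m = P m + g * (r1 * (E j + \<phi> ((- q) ^ j) * e j * c1) - (P j + \<phi> ((- q) ^ j) * e j * p 0))"
          unfolding E_def P_def m by (rule pseq_sum)
        have P1: "P m = \<phi> (A m) * e m + \<phi> ((- 1) ^ j * q) * S m"
          using Pform[of m] less.prems by (simp add: m)
        have S1: "S m = FE j * g + g * S j" unfolding S_def m by (rule Ssum)
        have P2: "P j = \<phi> (A j) * e j + \<phi> ((- 1) ^ j * q) * S j"
          using Pform[of j] less.prems m by simp
        have E2: "E j = \<phi> (A j) * e j" using less.IH[of j] less.prems m by simp
        define C where "C = q powi (int j - int k) - q powi (- int j)"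
        have FE1: "FE j = \<phi> C * e j" by (simp add: FE_def C_def)
        have X: "(-1)^j * q * C + q^2 * A j + q^2 * (-q)^j * (q powi (- int k) * qint q (int k))
             - A j - (-q)^j * (q powi (1 - int k) * (1 + qint q (int k - 1))) = 0"
          using scalar1[OF q0 kpos, of j] by (simp add: C_def A_def)
        have Z: "\<phi> ((-1)^j * q) * \<phi> C + r1 * \<phi> (A j) + r1 * \<phi> ((-q)^j) * c1 - \<phi> (A j) - \<phi> ((-q)^j) * p 0 = 0"
        proof -
          have "\<phi> ((-1)^j * q * C + q^2 * A j + q^2 * (-q)^j * (q powi (- int k) * qint q (int k))
             - A j - (-q)^j * (q powi (1 - int k) * (1 + qint q (int k - 1))))
             = \<phi> ((-1)^j * q) * \<phi> C + r1 * \<phi> (A j) + r1 * \<phi> ((-q)^j) * c1 - \<phi> (A j) - \<phi> ((-q)^j) * p 0"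
            unfolding r1_def c1_def p0 by (simp only: hadd hmul hdiff mult.assoc)
          then show ?thesis using X hz by simp
        qed
        have "E m = \<phi> (A m) * e m + g * e j * (\<phi> ((-1)^j * q) * \<phi> C + r1 * \<phi> (A j) + r1 * \<phi> ((-q)^j) * c1 - \<phi> (A j) - \<phi> ((-q)^j) * p 0)"
          unfolding E1 P1 S1 P2 E2 FE1 by (simp add: algebra_simps)
        then show ?thesis using Z by simp
      qed
    qed
  qed
  define c2 where "c2 = \<phi> (q powi (2 - int k) * qint q (int k - 2))"
  define r2 where "r2 = \<phi> (q powi (-2))"
  define E' where "E' m = (\<Sum>i<m. \<phi> (q powi (- int i)) * h i * pseq c2 r2 p g (m - i))" for m
  define P' where "P' m = (\<Sum>i<m. \<phi> (q powi (- int i)) * h i * p (m - i))" for m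
  define FH where "FH j = \<phi> (q powi (int j - 1) + q powi (- int j + 1 - int k)) * h j" for j
  define S' where "S' m = (\<Sum>i=1..m div 2. FH (m - 2 * i) * g ^ i)" for m
  have Pform': "P' m = \<phi> (qint q (int m)) * h m + S' m" if "m \<le> n" for m
  proof (cases "m = 0")
    case True then show ?thesis by (simp add: P'_def S'_def qint_def hz)
  next
    case False
    have "(\<Sum>i=1..m div 2. \<phi> (q powi (int m - 2 * int i - 1) + q powi (- int m + 2 * int i + 1 - int k)) * h (m - 2 * i) * g ^ i) = S' m"
      unfolding S'_def
    proof (rule sum.cong[OF refl])
      fix i assume "i \<in> {1..m div 2}"
      then have "int (m - 2 * i) = int m - 2 * int i" by auto
      then show "\<phi> (q powi (int m - 2 * int i - 1) + q powi (- int m + 2 * int i + 1 - int k)) * h (m - 2 * i) * g ^ i = FH (m - 2 * i) * g ^ i"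
        by (simp add: FH_def)
    qed
    then show ?thesis using eqH[of m] False that by (simp add: P'_def)
  qed
  have Eind': "m \<le> n \<Longrightarrow> E' m = \<phi> (qint q (int m)) * h m" for m
  proof (induction m rule: less_induct)
    case (less m)
    show ?case
    proof (cases m)
      case 0 then show ?thesis by (simp add: E'_def qint_def hz)
    next
      case (Suc m')
      show ?thesis
      proof (cases m')
        case 0
        have "E' 1 = P' 1" by (simp add: E'_def P'_def)
        moreover have "S' 1 = 0" by (simp add: S'_def)
        ultimately show ?thesis using Pform'[of 1] less.prems Suc 0 by simp
      next
        case (Suc j)
        have m: "m = Suc (Suc j)" using \<open>m = Suc m'\<close> Suc by simp
        have E1: "E' m = P' m + g * (r2 * (E' j + \<phi> (q powi (- int j)) * h j * c2) - (P' j + \<phi> (q powi (- int j)) * h j * p 0))"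
          unfolding E'_def P'_def m by (rule pseq_sum)
        have P1: "P' m = \<phi> (qint q (int m)) * h m + S' m"
          using Pform'[of m] less.prems by simp
        have S1: "S' m = FH j * g + g * S' j" unfolding S'_def m by (rule Ssum)
        have P2: "P' j = \<phi> (qint q (int j)) * h j + S' j"
          using Pform'[of j] less.prems m by simp
        have E2: "E' j = \<phi> (qint q (int j)) * h j" using less.IH[of j] less.prems m by simp
        define C where "C = q powi (int j - 1) + q powi (- int j + 1 - int k)"
        have FH1: "FH j = \<phi> C * h j" by (simp add: FH_def C_def)
        have X: "C + q powi (-2) * qint q (int j) + q powi (-2) * q powi (- int j) * (q powi (2 - int k) * qint q (int k - 2))
             - qint q (int j) - q powi (- int j) * (q powi (1 - int k) * (1 + qint q (int k - 1))) = 0"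
          using scalar2[OF q0 kpos, of j] by (simp add: C_def)
        have Z: "\<phi> C + r2 * \<phi> (qint q (int j)) + r2 * \<phi> (q powi (- int j)) * c2 - \<phi> (qint q (int j)) - \<phi> (q powi (- int j)) * p 0 = 0"
        proof -
          have "\<phi> (C + q powi (-2) * qint q (int j) + q powi (-2) * q powi (- int j) * (q powi (2 - int k) * qint q (int k - 2))
             - qint q (int j) - q powi (- int j) * (q powi (1 - int k) * (1 + qint q (int k - 1))))
             = \<phi> C + r2 * \<phi> (qint q (int j)) + r2 * \<phi> (q powi (- int j)) * c2 - \<phi> (qint q (int j)) - \<phi> (q powi (- int j)) * p 0"
            unfolding r2_def c2_def p0 by (simp only: hadd hmul hdiff mult.assoc)
          then show ?thesis using X hz by simp
        qed
        have "E' m = \<phi> (qint q (int m)) * h m + g * h j * (\<phi> C + r2 * \<phi> (qint q (int j)) + r2 * \<phi> (q powi (- int j)) * c2 - \<phi> (qint q (int j)) - \<phi> (q powi (- int j)) * p 0)"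
          unfolding E1 P1 S1 P2 E2 FH1 by (simp add: algebra_simps)
        then show ?thesis using Z by simp
      qed
    qed
  qed
  have V: "\<And>m. m \<le> n \<Longrightarrow> (\<Sum>i\<le>m. (- 1) ^ i * e i * h (m - i)) = (if m = 0 then 1 else 0) - (if m = 2 then g else 0)"
    by (rule eqEH)
  have U1: "(\<Sum>i\<le>m. (- 1) ^ i * shiftseq e g i * h (m - i)) = (if m = 0 then 1 else 0)" if "m \<le> n" for m
    by (rule deltaind[where V="\<lambda>m. \<Sum>i\<le>m. (- 1) ^ i * e i * h (m - i)" and g=g and n=n])
       (simp, simp, rule shiftL, rule V, assumption, rule that)
  have U2: "(\<Sum>i\<le>m. (- 1) ^ i * e i * shiftseq h g (m - i)) = (if m = 0 then 1 else 0)" if "m \<le> n" for m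
    by (rule deltaind[where V="\<lambda>m. \<Sum>i\<le>m. (- 1) ^ i * e i * h (m - i)" and g=g and n=n])
       (simp, simp, rule shiftR, rule V, assumption, rule that)
  show ?thesis
    using Eind Eind' U1 U2 unfolding E_def A_def E'_def c1_def r1_def c2_def r2_def by auto
qed

end
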